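(* Let $u:(0,\infty)\to\mathbb{R}$ be strictly concave and continuously differentiable, and let $b>0$. Let $\hat u$ be the modified utility of $u$ with budget $b$ (defined in the context). Then (i) $\hat u$ is continuously differentiable on $(0,\infty)$; (ii) $\hat u$ is strictly concave on $(0,\infty)$; (iii) for all $\lambda>0$, $$\arg\max_{x>0}\ \hat u(x)-\lambda x=\max\Big\{0,\ \min\Big\{(u')^{-1}(\lambda),\ \tfrac{b}{\lambda}\Big\}\Big\}.$$
   Context: Modified utility: let $0=\tilde x_0<\tilde x_1<\dots<\tilde x_k<\tilde x_{k+1}=\infty$, where $\tilde x_1,\dots,\tilde x_k$ are the (crossover) solutions $\tilde x>0$ of $u'(\tilde x)=b/\tilde x$. On each interval $(\tilde x_{j-1},\tilde x_j)$ either $u'(x)\le b/x$ throughout or $u'(x)>b/x$ throughout; define $\hat u(x)=u(x)+c_j$ on intervals of the first type and $\hat u(x)=b\log x+d_j$ on intervals of the second type, where the constants $c_j,d_j$ are chosen sequentially so that $\hat u$ is continuous at each crossover point, with $c_1=d_1=0$. *)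

theory Defs
  imports "HOL-Analysis.Analysis"
begin

definition strictly_concave_on :: "real set \<Rightarrow> (real \<Rightarrow> real) \<Rightarrow> bool" where
  "strictly_concave_on S f \<longleftrightarrow> convex S \<and>
     (\<forall>x\<in>S. \<forall>y\<in>S. x \<noteq> y \<longrightarrow> (\<forall>t. 0 < t \<and> t < 1 \<longrightarrow>
        f ((1 - t) * x + t * y) > (1 - t) * f x + t * f y))"

definition C1_on :: "real set \<Rightarrow> (real \<Rightarrow> real) \<Rightarrow> bool" where
  "C1_on S f \<longleftrightarrow> (\<forall>x\<in>S. f differentiable (at x)) \<and> continuous_on S (deriv f)"

definition crossovers :: "(real \<Rightarrow> real) \<Rightarrow> real \<Rightarrow> real set" where
  "crossovers u b = {x. 0 < x \<and> deriv u x = b / x}"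

text \<open>The sorted list of crossover points x_1 < ... < x_k (meaningful when finite).\<close>
definition cpts :: "(real \<Rightarrow> real) \<Rightarrow> real \<Rightarrow> real list" where
  "cpts u b = sorted_list_of_set (crossovers u b)"

text \<open>Interval number j (j = 0..k, i.e. the paper's interval j+1) is
  (lo j, hi j), where lo 0 = 0 and hi k = infinity.\<close>
definition ival_lo :: "(real \<Rightarrow> real) \<Rightarrow> real \<Rightarrow> nat \<Rightarrow> real" where
  "ival_lo u b j = (if j = 0 then 0 else cpts u b ! (j - 1))"

definition in_ival :: "(real \<Rightarrow> real) \<Rightarrow> real \<Rightarrow> nat \<Rightarrow> real \<Rightarrow> bool" where
  "in_ival u b j x \<longleftrightarrow> ival_lo u b j < x \<and>
      (j < length (cpts u b) \<longrightarrow> x < cpts u b ! j)"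

definition first_type :: "(real \<Rightarrow> real) \<Rightarrow> real \<Rightarrow> nat \<Rightarrow> bool" where
  "first_type u b j \<longleftrightarrow> (\<forall>x. in_ival u b j x \<longrightarrow> deriv u x \<le> b / x)"

definition base_fun :: "(real \<Rightarrow> real) \<Rightarrow> real \<Rightarrow> nat \<Rightarrow> real \<Rightarrow> real" where
  "base_fun u b j x = (if first_type u b j then u x else b * ln x)"

text \<open>The additive constants (c_j or d_j), chosen sequentially for continuity
  at the crossover points, with the constant on the first interval equal to 0.\<close>
fun offset :: "(real \<Rightarrow> real) \<Rightarrow> real \<Rightarrow> nat \<Rightarrow> real" where
  "offset u b 0 = 0"
| "offset u b (Suc j) = offset u b j + base_fun u b j (cpts u b ! j)
                         - base_fun u b (Suc j) (cpts u b ! j)"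

text \<open>The modified utility: for x > 0, x lies in interval j (closed on the left at
  crossover points) where j is the number of crossover points \<le> x.\<close>
definition modified_utility :: "(real \<Rightarrow> real) \<Rightarrow> real \<Rightarrow> real \<Rightarrow> real" where
  "modified_utility u b x =
     (let j = card {y \<in> crossovers u b. y \<le> x} in base_fun u b j x + offset u b j)"

definition deriv_inv :: "(real \<Rightarrow> real) \<Rightarrow> real \<Rightarrow> ereal" where
  "deriv_inv u lam =
     (if \<exists>x>0. deriv u x = lam then ereal (THE x. 0 < x \<and> deriv u x = lam)
      else if \<forall>x>0. deriv u x < lam then 0 else \<infinity>)"

end

theory Submission
  imports Defs
begin

lemma tangent_le:
  assumes conc: "strictly_concave_on {0<..} u"
    and d: "(u has_real_derivative d) (at c)" and c: "c > 0" and z: "z > 0"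
  shows "u z \<le> u c + d * (z - c)"
proof -
  have cv: "convex_on {0<..} (\<lambda>x. - u x)"
  proof (rule convex_onI)
    fix t x y :: real assume t: "t > 0" "t < 1" and xy: "x \<in> {0<..}" "y \<in> {0<..}"
    show "- u ((1 - t) *\<^sub>R x + t *\<^sub>R y) \<le> (1 - t) * - u x + t * - u y"
    proof (cases "x = y")
      case True then show ?thesis by (simp add: algebra_simps)
    next
      case False
      with conc t xy have "u ((1 - t) * x + t * y) > (1 - t) * u x + t * u y"
        unfolding strictly_concave_on_def by auto
      then show ?thesis by simp
    qed
  qed (simp add: convex_real_interval)
  have "(- d) * (z - c) \<le> - u z - - u c"
    apply (rule convex_on_imp_above_tangent[OF cv])
    using c z by (auto intro!: convex_connected has_field_derivative_at_within DERIV_minus d simp: interior_open)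
  then show ?thesis by simp
qed

lemma deriv_strict_dec:
  assumes conc: "strictly_concave_on {0<..} u"
    and dx: "(u has_real_derivative dx) (at x)" and dy: "(u has_real_derivative dy) (at y)"
    and x: "x > 0" and xy: "x < y"
  shows "dy < dx"
proof -
  define m where "m = (x + y) / 2"
  have m: "m > 0" "x < m" "m < y" using x xy by (auto simp: m_def)
  have H: "\<forall>x\<in>{0<..}. \<forall>y\<in>{0<..}. x \<noteq> y \<longrightarrow> (\<forall>t. 0 < t \<and> t < 1 \<longrightarrow>
        u ((1 - t) * x + t * y) > (1 - t) * u x + t * u y)"
    using conc unfolding strictly_concave_on_def by blast
  have "u ((1 - 1/2) * x + (1/2) * y) > (1 - 1/2) * u x + (1/2) * u y"
    by (rule H[rule_format]) (use x xy in auto)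
  moreover have "(1 - 1/2) * x + (1/2) * y = m" by (simp add: m_def)
  ultimately have s: "2 * u m > u x + u y" by simp
  have t1: "u m \<le> u x + dx * (m - x)" by (rule tangent_le[OF conc dx]) (use x m in auto)
  have t2: "u m \<le> u y + dy * (m - y)" by (rule tangent_le[OF conc dy]) (use x xy m in auto)
  have "0 < dx * (m - x) + dy * (m - y)" using s t1 t2 by linarith
  moreover have "dx * (m - x) + dy * (m - y) = (dx - dy) * ((y - x)/2)" by (simp add: m_def field_simps)
  ultimately have "0 < (dx - dy) * ((y - x)/2)" by simp
  thus ?thesis using xy by (simp add: zero_less_mult_iff)
qed

lemma concave_from_deriv:
  assumes D: "\<And>x. x > 0 \<Longrightarrow> (f has_real_derivative f' x) (at x)"
    and mono: "\<And>x y. 0 < x \<Longrightarrow> x < y \<Longrightarrow> f' y < f' x"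
  shows "strictly_concave_on {0<..} f"
proof -
  have main: "f ((1 - t) * x + t * y) > (1 - t) * f x + t * f y"
    if xy: "0 < x" "x < y" and t: "0 < t" "t < 1" for x y t
  proof -
    define z where "z = (1 - t) * x + t * y"
    have zx: "z - x = t * (y - x)" and yz: "y - z = (1 - t) * (y - x)" by (simp_all add: z_def algebra_simps)
    have z: "x < z" "z < y" using zx yz xy t by (auto intro: mult_pos_pos simp: algebra_simps)
      (smt (verit) mult_pos_pos zx, smt (verit) mult_pos_pos yz)
    obtain a where a: "x < a" "a < z" "f z - f x = (z - x) * f' a"
      using MVT2[OF z(1), of f f'] D xy by force
    obtain c where c: "z < c" "c < y" "f y - f z = (y - z) * f' c"
      using MVT2[OF z(2), of f f'] D xy z by force
    have "f' c < f' a" using mono a c xy by simp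
    hence "t * (1 - t) * (y - x) * f' c < t * (1 - t) * (y - x) * f' a"
      using xy t by (intro mult_strict_left_mono) auto
    moreover have "t * (f y - f z) = t * (1 - t) * (y - x) * f' c" using c(3) yz by simp
    moreover have "(1 - t) * (f z - f x) = t * (1 - t) * (y - x) * f' a" using a(3) zx by simp
    ultimately have "t * (f y - f z) < (1 - t) * (f z - f x)" by linarith
    thus ?thesis unfolding z_def[symmetric] by (simp add: algebra_simps)
  qed
  show ?thesis unfolding strictly_concave_on_def
  proof (intro conjI ballI impI allI)
    fix x y t :: real assume x: "x \<in> {0<..}" and y: "y \<in> {0<..}" and ne: "x \<noteq> y" and t: "0 < t \<and> t < 1"
    show "f ((1 - t) * x + t * y) > (1 - t) * f x + t * f y"
    proof (cases "x < y")
      case True then show ?thesis using main x t by auto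
    next
      case False
      hence "y < x" using ne by auto
      from main[OF _ this, of "1 - t"] y t show ?thesis by (simp add: algebra_simps)
    qed
  qed (simp add: convex_real_interval)
qed

context
  fixes u :: "real \<Rightarrow> real" and b :: real
  assumes conc: "strictly_concave_on {0<..} u"
    and C1: "C1_on {0<..} u"
    and bpos: "b > 0"
    and fin: "finite (crossovers u b)"
begin

abbreviation "cs \<equiv> cpts u b"
abbreviation "C \<equiv> crossovers u b"

definition hh :: "real \<Rightarrow> real" where "hh x = min (deriv u x) (b / x)"

lemma Du: "x > 0 \<Longrightarrow> (u has_real_derivative deriv u x) (at x)"
  using C1 unfolding C1_on_def by (simp add: DERIV_deriv_iff_real_differentiable)

lemma cont_du: "continuous_on {0<..} (deriv u)"
  using C1 unfolding C1_on_def by simp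

lemma set_cs: "set cs = C" using fin by (simp add: cpts_def)

lemma sorted_cs: "sorted_wrt (<) cs" by (simp add: cpts_def strict_sorted_list_of_set)

lemma cs_less: "i < j \<Longrightarrow> j < length cs \<Longrightarrow> cs ! i < cs ! j"
  using sorted_cs by (simp add: sorted_wrt_nth_less)

lemma cs_less_iff: "i < length cs \<Longrightarrow> j < length cs \<Longrightarrow> cs ! i < cs ! j \<longleftrightarrow> i < j"
  using cs_less[of i j] cs_less[of j i] by (cases i j rule: linorder_cases) auto

lemma cs_le_iff: "i < length cs \<Longrightarrow> j < length cs \<Longrightarrow> cs ! i \<le> cs ! j \<longleftrightarrow> i \<le> j"
  using cs_less_iff[of j i] by (simp add: not_less[symmetric])

lemma cs_C: "i < length cs \<Longrightarrow> cs ! i \<in> C"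
  using set_cs nth_mem by blast

lemma cs_pos: "i < length cs \<Longrightarrow> cs ! i > 0"
  using cs_C by (simp add: crossovers_def)

lemma cs_eq: "i < length cs \<Longrightarrow> deriv u (cs ! i) = b / cs ! i"
  using cs_C by (simp add: crossovers_def)

lemma C_cs: "y \<in> C \<Longrightarrow> \<exists>i < length cs. y = cs ! i"
  using set_cs by (metis in_set_conv_nth)

lemma lo_nonneg: "j \<le> length cs \<Longrightarrow> ival_lo u b j \<ge> 0"
  using cs_pos by (auto simp: ival_lo_def less_imp_le)

lemma ival_pos: "j \<le> length cs \<Longrightarrow> in_ival u b j x \<Longrightarrow> x > 0"
  using lo_nonneg unfolding in_ival_def by force

lemma no_cross: "j \<le> length cs \<Longrightarrow> in_ival u b j z \<Longrightarrow> z \<notin> C"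
proof
  assume j: "j \<le> length cs" and z: "in_ival u b j z" and zC: "z \<in> C"
  then obtain i where i: "i < length cs" "z = cs ! i" using C_cs by blast
  have "j \<le> i"
  proof (cases "j = 0")
    case False
    then have "cs ! (j - 1) < cs ! i" using z i by (simp add: in_ival_def ival_lo_def)
    moreover have "j - 1 < length cs" using j False by auto
    ultimately have "j - 1 < i" using i cs_less_iff[of "j - 1" i] by blast
    then show ?thesis by auto
  qed simp
  moreover have "j < length cs \<Longrightarrow> i < j"
    using z i cs_less_iff[of i j] by (simp add: in_ival_def)
  ultimately show False using i j by (cases "j < length cs") auto
qed

lemma count: 
  assumes j: "j \<le> length cs" and lo: "j > 0 \<Longrightarrow> cs ! (j - 1) \<le> x" and hi: "j < length cs \<Longrightarrow> x < cs ! j"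
  shows "card {y \<in> C. y \<le> x} = j"
proof -
  have "{y \<in> C. y \<le> x} = (\<lambda>i. cs ! i) ` {..<j}"
  proof (intro equalityI subsetI)
    fix y assume "y \<in> {y \<in> C. y \<le> x}"
    hence y: "y \<in> C" "y \<le> x" by auto
    then obtain i where i: "i < length cs" "y = cs ! i" using C_cs by blast
    have "i < j"
    proof (rule ccontr)
      assume "\<not> i < j"
      hence "j < length cs" "cs ! j \<le> cs ! i" using i j cs_le_iff by auto
      thus False using hi y i by auto
    qed
    thus "y \<in> (\<lambda>i. cs ! i) ` {..<j}" using i by auto
  next
    fix y assume "y \<in> (\<lambda>i. cs ! i) ` {..<j}"
    then obtain i where i: "i < j" "y = cs ! i" by auto
    have "cs ! i \<in> C" using i j cs_C by auto
    moreover have "cs ! i \<le> cs ! (j - 1)" using i j cs_le_iff by auto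
    moreover have "cs ! (j - 1) \<le> x" using lo i by simp
    ultimately show "y \<in> {y \<in> C. y \<le> x}" using i by simp
  qed
  moreover have "inj_on (\<lambda>i. cs ! i) {..<j}"
  proof (rule inj_onI)
    fix i i' assume "i \<in> {..<j}" "i' \<in> {..<j}" "cs ! i = cs ! i'"
    thus "i = i'" using j cs_less_iff[of i i'] cs_less_iff[of i' i] by (cases i i' rule: linorder_cases) auto
  qed
  ultimately show ?thesis by (simp add: card_image)
qed

lemma locate:
  assumes "x > 0"
  shows "\<exists>j \<le> length cs. (j > 0 \<longrightarrow> cs ! (j - 1) \<le> x) \<and> (j < length cs \<longrightarrow> x < cs ! j)"
proof (cases "\<exists>i < length cs. x < cs ! i")
  case True
  define j where "j = (LEAST i. i < length cs \<and> x < cs ! i)"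
  have j: "j < length cs \<and> x < cs ! j" using LeastI_ex[OF True] unfolding j_def .
  have "j > 0 \<longrightarrow> cs ! (j - 1) \<le> x"
  proof
    assume "j > 0"
    hence "\<not> (j - 1 < length cs \<and> x < cs ! (j - 1))"
      unfolding j_def using not_less_Least[of "j - 1"] j_def by (metis diff_less zero_less_one)
    thus "cs ! (j - 1) \<le> x" using j by auto
  qed
  thus ?thesis using j by (intro exI[of _ j]) auto
next
  case False
  hence a: "\<forall>i<length cs. cs ! i \<le> x" using not_less by blast
  show ?thesis
  proof (intro exI[of _ "length cs"] conjI impI)
    assume "length cs > 0"
    thus "cs ! (length cs - 1) \<le> x" using a by simp
  qed auto
qed

lemma g_cont: "continuous_on {0<..} (\<lambda>x. deriv u x - b / x)"
  by (intro continuous_intros cont_du) auto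

lemma base_fun_eq: "base_fun u b j = (if first_type u b j then u else (\<lambda>x. b * ln x))"
  by (auto simp: base_fun_def)

lemma base_deriv:
  assumes j: "j \<le> length cs" and x: "in_ival u b j x"
  shows "(base_fun u b j has_real_derivative hh x) (at x)"
proof -
  have xpos: "x > 0" using ival_pos[OF j x] .
  show ?thesis
  proof (cases "first_type u b j")
    case True
    hence "deriv u x \<le> b / x" using x by (simp add: first_type_def)
    hence "hh x = deriv u x" by (simp add: hh_def)
    thus ?thesis using True Du[OF xpos] by (simp add: base_fun_eq)
  next
    case False
    then obtain x' where x': "in_ival u b j x'" "deriv u x' > b / x'"
      by (auto simp: first_type_def not_le)
    have x'pos: "x' > 0" using ival_pos[OF j x'(1)] .
    have "b / x \<le> deriv u x"
    proof (rule ccontr)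
      assume "\<not> ?thesis"
      hence neg: "deriv u x - b / x < 0" by simp
      have pos: "deriv u x' - b / x' > 0" using x' by simp
      have "\<exists>z. min x x' \<le> z \<and> z \<le> max x x' \<and> deriv u z - b / z = 0"
      proof (cases "x \<le> x'")
        case True
        have "continuous_on {x..x'} (\<lambda>z. deriv u z - b / z)"
          by (rule continuous_on_subset[OF g_cont]) (use xpos in auto)
        then obtain z where "x \<le> z" "z \<le> x'" "deriv u z - b / z = 0"
          using IVT'[of "\<lambda>z. deriv u z - b / z" x 0 x'] True neg pos by auto
        then show ?thesis using True by (intro exI[of _ z]) auto
      next
        case False
        have "continuous_on {x'..x} (\<lambda>z. deriv u z - b / z)"
          by (rule continuous_on_subset[OF g_cont]) (use x'pos in auto)
        then obtain z where "x' \<le> z" "z \<le> x" "deriv u z - b / z = 0"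
          using IVT2'[of "\<lambda>z. deriv u z - b / z" x 0 x'] False neg pos by auto
        then show ?thesis using False by (intro exI[of _ z]) auto
      qed
      then obtain z where z: "min x x' \<le> z" "z \<le> max x x'" "deriv u z - b / z = 0" by blast
      have "in_ival u b j z" using x x' z unfolding in_ival_def by auto
      moreover have "z > 0" using z xpos x'pos by auto
      ultimately show False using no_cross[OF j] z by (simp add: crossovers_def)
    qed
    hence "hh x = b / x" by (simp add: hh_def)
    moreover have "((\<lambda>x. b * ln x) has_real_derivative b * (1 / x)) (at x)"
      using xpos by (auto intro!: derivative_eq_intros)
    ultimately show ?thesis using False by (simp add: base_fun_eq)
  qed
qed

lemma base_deriv_C:
  assumes x: "x \<in> C"
  shows "(base_fun u b j has_real_derivative hh x) (at x)"
proof -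
  have xpos: "x > 0" and e: "deriv u x = b / x" using x by (auto simp: crossovers_def)
  have "hh x = deriv u x" using e by (simp add: hh_def)
  moreover have "((\<lambda>x. b * ln x) has_real_derivative b * (1 / x)) (at x)"
    using xpos by (auto intro!: derivative_eq_intros)
  ultimately show ?thesis using Du[OF xpos] e by (simp add: base_fun_eq)
qed

lemma open_W: "open {y::real. a < y \<and> (P \<longrightarrow> y < c)}"
proof (cases P)
  case True
  hence "{y::real. a < y \<and> (P \<longrightarrow> y < c)} = {a<..<c}" by auto
  thus ?thesis by simp
next
  case False
  hence "{y::real. a < y \<and> (P \<longrightarrow> y < c)} = {a<..}" by auto
  thus ?thesis by simp
qed

lemma mu_deriv:
  assumes x: "x > 0"
  shows "(modified_utility u b has_real_derivative hh x) (at x)"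
proof -
  obtain j where j: "j \<le> length cs" "j > 0 \<longrightarrow> cs ! (j - 1) \<le> x" "j < length cs \<longrightarrow> x < cs ! j"
    using locate[OF x] by blast
  show ?thesis
  proof (cases "j = 0 \<or> cs ! (j - 1) < x")
    case True
    have xin: "in_ival u b j x" using True j x by (auto simp: in_ival_def ival_lo_def)
    have op: "open {y. in_ival u b j y}" unfolding in_ival_def by (rule open_W)
    have eq: "base_fun u b j y + offset u b j = modified_utility u b y" if y: "y \<in> {y. in_ival u b j y}" for y
    proof -
      have "card {z \<in> C. z \<le> y} = j"
        by (rule count[OF j(1)]) (use y in \<open>auto simp: in_ival_def ival_lo_def\<close>)
      thus ?thesis by (simp add: modified_utility_def)
    qed
    have "((\<lambda>y. base_fun u b j y + offset u b j) has_real_derivative hh x + 0) (at x)"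
      by (rule DERIV_add[OF base_deriv[OF j(1) xin] DERIV_const])
    then show ?thesis
      using has_field_derivative_transform_within_open[OF _ op _ eq] xin by simp
  next
    case False
    hence j0: "j > 0" and cx: "cs ! (j - 1) = x" using j by auto
    define i where "i = j - 1"
    have i: "i < length cs" "Suc i = j" "cs ! i = x" using j0 j cx by (auto simp: i_def)
    have xC: "x \<in> C" using cs_C[OF i(1)] i by simp
    define A where "A = (\<lambda>y. base_fun u b i y + offset u b i)"
    define B where "B = (\<lambda>y. base_fun u b j y + offset u b j)"
    have dA: "(A has_real_derivative hh x) (at x)"
      using DERIV_add[OF base_deriv_C[OF xC] DERIV_const] unfolding A_def by simp
    have dB: "(B has_real_derivative hh x) (at x)"
      using DERIV_add[OF base_deriv_C[OF xC] DERIV_const] unfolding B_def by simp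
    have AB: "A x = B x"
      using i unfolding A_def B_def by (auto simp del: offset.simps simp: offset.simps(2)[of u b i])
    have "((\<lambda>y. if y \<in> {..<x} then A y else B y) has_derivative
        (if x \<in> {..<x} then (\<lambda>_. (*) (hh x)) x else (\<lambda>_. (*) (hh x)) x)) (at x within ({..<x} \<union> {x..}))"
      by (rule has_derivative_If_within_closures)
        (use dA dB AB in \<open>auto simp: has_field_derivative_def intro: has_derivative_at_withinI\<close>)
    moreover have "{..<x} \<union> {x..} = (UNIV :: real set)" by auto
    ultimately have P: "((\<lambda>y. if y \<in> {..<x} then A y else B y) has_real_derivative hh x) (at x)"
      by (simp add: has_field_derivative_def)
    have op: "open {y. ival_lo u b i < y \<and> (j < length cs \<longrightarrow> y < cs ! j)}" by (rule open_W)
    have xin: "x \<in> {y. ival_lo u b i < y \<and> (j < length cs \<longrightarrow> y < cs ! j)}"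
    proof -
      have "ival_lo u b i < x"
      proof (cases "i = 0")
        case True thus ?thesis using x by (simp add: ival_lo_def)
      next
        case False thus ?thesis using i cs_less[of "i - 1" i] by (simp add: ival_lo_def)
      qed
      thus ?thesis using j by simp
    qed
    have eq: "(if y \<in> {..<x} then A y else B y) = modified_utility u b y"
      if y: "y \<in> {y. ival_lo u b i < y \<and> (j < length cs \<longrightarrow> y < cs ! j)}" for y
    proof (cases "y < x")
      case True
      have "card {z \<in> C. z \<le> y} = i"
        by (rule count) (use y True i in \<open>auto simp: ival_lo_def\<close>)
      thus ?thesis using True by (simp add: modified_utility_def A_def)
    next
      case False
      have "card {z \<in> C. z \<le> y} = j"
        by (rule count) (use y False i j in \<open>auto simp: ival_lo_def\<close>)
      thus ?thesis using False by (simp add: modified_utility_def B_def)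
    qed
    show ?thesis
      using has_field_derivative_transform_within_open[OF P op xin eq] by simp
  qed
qed

lemma hh_dec: "0 < x \<Longrightarrow> x < y \<Longrightarrow> hh y < hh x"
proof -
  assume xy: "0 < x" "x < y"
  have "deriv u y < deriv u x" by (rule deriv_strict_dec[OF conc Du Du]) (use xy in auto)
  moreover have "b / y < b / x" using xy bpos by (simp add: divide_strict_left_mono)
  ultimately show "hh y < hh x" by (auto simp: hh_def min_def)
qed

lemma hh_cont: "continuous_on {0<..} hh"
  unfolding hh_def[abs_def] by (intro continuous_intros cont_du) auto

lemma part1: "C1_on {0<..} (modified_utility u b)"
  unfolding C1_on_def
proof
  show "\<forall>x\<in>{0<..}. modified_utility u b differentiable at x"
    using mu_deriv real_differentiable_def by auto
  have "continuous_on {0<..} (deriv (modified_utility u b)) = continuous_on {0<..} hh"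
    by (rule continuous_on_cong) (auto intro: DERIV_imp_deriv mu_deriv)
  thus "continuous_on {0<..} (deriv (modified_utility u b))" using hh_cont by simp
qed

lemma part2: "strictly_concave_on {0<..} (modified_utility u b)"
  by (rule concave_from_deriv[OF mu_deriv hh_dec])

lemma f_deriv: "x > 0 \<Longrightarrow> ((\<lambda>x. modified_utility u b x - lam * x) has_real_derivative hh x - lam) (at x)"
  using DERIV_diff[OF mu_deriv DERIV_cmult_Id[of lam]] by simp

lemma unique_max:
  assumes m: "m > 0" "hh m = lam"
  shows "{x. 0 < x \<and> (\<forall>y>0. modified_utility u b y - lam * y \<le> modified_utility u b x - lam * x)} = {m}"
proof -
  define f where "f = (\<lambda>x. modified_utility u b x - lam * x)"
  have D: "x > 0 \<Longrightarrow> (f has_real_derivative hh x - lam) (at x)" for x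
    unfolding f_def by (rule f_deriv)
  have lt: "f y < f m" if y: "y > 0" "y \<noteq> m" for y
  proof (cases "y < m")
    case True
    obtain z where z: "y < z" "z < m" "f m - f y = (m - y) * (hh z - lam)"
      using MVT2[OF True, of f "\<lambda>x. hh x - lam"] D y by force
    have "hh z > lam" using hh_dec[of z m] z y m by simp
    hence "(m - y) * (hh z - lam) > 0" using True by simp
    thus ?thesis using z by simp
  next
    case False
    hence ym: "m < y" using y by simp
    obtain z where z: "m < z" "z < y" "f y - f m = (y - m) * (hh z - lam)"
      using MVT2[OF ym, of f "\<lambda>x. hh x - lam"] D m by force
    have "hh z < lam" using hh_dec[of m z] z m by simp
    hence "(y - m) * (hh z - lam) < 0" using ym by (simp add: mult_pos_neg)
    thus ?thesis using z by simp
  qed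
  have "{x. 0 < x \<and> (\<forall>y>0. f y \<le> f x)} = {m}"
  proof (intro equalityI subsetI)
    fix x assume "x \<in> {x. 0 < x \<and> (\<forall>y>0. f y \<le> f x)}"
    hence x: "x > 0" "f m \<le> f x" using m by auto
    show "x \<in> {m}" using lt[OF x(1)] x(2) by (cases "x = m") auto
  next
    fix x assume "x \<in> {m}"
    hence xm: "x = m" by simp
    have "f y \<le> f m" if "y > 0" for y
      using lt[OF that] by (cases "y = m") (auto simp: less_imp_le)
    thus "x \<in> {x. 0 < x \<and> (\<forall>y>0. f y \<le> f x)}" using xm m by auto
  qed
  thus ?thesis unfolding f_def by simp
qed

lemma strict_dec:
  assumes lt: "\<And>y. y > 0 \<Longrightarrow> hh y < lam"
  shows "\<forall>x y. 0 < x \<and> x < y \<longrightarrow> modified_utility u b y - lam * y < modified_utility u b x - lam * x"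
proof (intro allI impI)
  fix x y :: real assume xy: "0 < x \<and> x < y"
  define f where "f = (\<lambda>x. modified_utility u b x - lam * x)"
  have D: "x > 0 \<Longrightarrow> (f has_real_derivative hh x - lam) (at x)" for x
    unfolding f_def by (rule f_deriv)
  obtain z where z: "x < z" "z < y" "f y - f x = (y - x) * (hh z - lam)"
    using MVT2[of x y f "\<lambda>x. hh x - lam"] D xy by force
  have "hh z < lam" using lt z xy by simp
  hence "(y - x) * (hh z - lam) < 0" using xy by (simp add: mult_pos_neg)
  thus "f y < f x" using z by simp
qed

lemma part3:
  assumes lam: "lam > 0"
  shows "(let t = max 0 (min (deriv_inv u lam) (ereal (b / lam)));
                f = (\<lambda>x. modified_utility u b x - lam * x)
            in (t > 0 \<longrightarrow> {x. 0 < x \<and> (\<forall>y>0. f y \<le> f x)} = {real_of_ereal t})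
             \<and> (t = 0 \<longrightarrow> (\<forall>x y. 0 < x \<and> x < y \<longrightarrow> f y < f x)))"
proof -
  have bl: "b / lam > 0" using bpos lam by simp
  show ?thesis
  proof (cases "\<exists>x>0. deriv u x = lam")
    case True
    then obtain x0 where x0: "x0 > 0" "deriv u x0 = lam" by blast
    have uniq: "(THE x. 0 < x \<and> deriv u x = lam) = x0"
    proof (rule the_equality)
      fix x assume x: "0 < x \<and> deriv u x = lam"
      show "x = x0"
      proof (rule ccontr)
        assume "x \<noteq> x0"
        hence "x < x0 \<or> x0 < x" by auto
        thus False
          using deriv_strict_dec[OF conc Du Du, of x x0] deriv_strict_dec[OF conc Du Du, of x0 x] x x0 by auto
      qed
    qed (use x0 in auto)
    define m where "m = min x0 (b / lam)"
    have t: "max 0 (min (deriv_inv u lam) (ereal (b / lam))) = ereal m"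
      using True uniq x0 bl by (auto simp: deriv_inv_def m_def min_def max_def)
    have mpos: "m > 0" using x0 bl by (simp add: m_def)
    have hm: "hh m = lam"
    proof (cases "x0 \<le> b / lam")
      case True
      hence "b / x0 \<ge> lam" using x0 lam by (simp add: field_simps)
      thus ?thesis using True x0 by (simp add: m_def hh_def)
    next
      case False
      hence "deriv u (b / lam) > deriv u x0"
        using deriv_strict_dec[OF conc Du Du, of "b / lam" x0] bl by simp
      moreover have "b / (b / lam) = lam" using bpos lam by simp
      ultimately show ?thesis using False x0 by (simp add: m_def hh_def)
    qed
    show ?thesis unfolding Let_def t using unique_max[OF mpos hm] mpos by simp
  next
    case nosol: False
    show ?thesis
    proof (cases "\<forall>x>0. deriv u x < lam")
      case True
      have t: "max 0 (min (deriv_inv u lam) (ereal (b / lam))) = 0"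
        using nosol True bl by (auto simp: deriv_inv_def)
      have "hh y < lam" if "y > 0" for y using True that by (auto simp: hh_def)
      then show ?thesis unfolding Let_def t using strict_dec by simp
    next
      case False
      then obtain y where y: "y > 0" "deriv u y > lam" using nosol by force
      have t: "max 0 (min (deriv_inv u lam) (ereal (b / lam))) = ereal (b / lam)"
        using nosol False bl by (auto simp: deriv_inv_def)
      have gt: "deriv u (b / lam) > lam"
      proof (rule ccontr)
        assume "\<not> ?thesis"
        hence le: "deriv u (b / lam) < lam" using nosol bl by force
        have yl: "y < b / lam"
        proof (rule ccontr)
          assume "\<not> ?thesis"
          moreover have "y \<noteq> b / lam" using le y by auto
          ultimately have "b / lam < y" by simp
          thus False using deriv_strict_dec[OF conc Du Du, of "b / lam" y] bl le y by simp
        qed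
        have "continuous_on {y..b / lam} (deriv u)"
          by (rule continuous_on_subset[OF cont_du]) (use y in auto)
        then obtain z where "y \<le> z" "z \<le> b / lam" "deriv u z = lam"
          using IVT2'[of "deriv u" "b / lam" lam y] le y yl by auto
        thus False using nosol y by auto
      qed
      have hm: "hh (b / lam) = lam"
        using gt bpos lam by (simp add: hh_def)
      show ?thesis unfolding Let_def t using unique_max[OF bl hm] bl bpos lam by simp
    qed
  qed
qed

end


theorem lemma2:
  fixes u :: "real \<Rightarrow> real" and b :: real
  assumes conc: "strictly_concave_on {0<..} u"
    and C1: "C1_on {0<..} u"
    and bpos: "b > 0"
    and fin: "finite (crossovers u b)"
  shows "C1_on {0<..} (modified_utility u b)
         \<and> strictly_concave_on {0<..} (modified_utility u b)
         \<and> (\<forall>lam>0.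
           (let t = max 0 (min (deriv_inv u lam) (ereal (b / lam)));
                f = (\<lambda>x. modified_utility u b x - lam * x)
            in (t > 0 \<longrightarrow> {x. 0 < x \<and> (\<forall>y>0. f y \<le> f x)} = {real_of_ereal t})
             \<and> (t = 0 \<longrightarrow> (\<forall>x y. 0 < x \<and> x < y \<longrightarrow> f y < f x))))"
  using part1[OF assms] part2[OF assms] part3[OF assms] by blast

end
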